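(* Let $A$ be a unital C*-algebra that admits a unital $*$-homomorphism $Z_{2,3}\to A$. Then $\xi(A)\leq6$. This applies in particular to all unital $\mathcal{Z}$-stable C*-algebras (unital C*-algebras $A$ with $A\cong A\otimes\mathcal{Z}$, where $\mathcal{Z}$ is the Jiang–Su algebra).
   Context: The dimension drop algebra is $Z_{2,3}=\{f\colon[0,1]\to M_2(\mathbb{C})\otimes M_3(\mathbb{C})\text{ continuous}: f(0)\in M_2(\mathbb{C})\otimes 1,\ f(1)\in 1\otimes M_3(\mathbb{C})\}$. For a unital ring $T$ generated by its commutators, $\xi(T)$ is the minimal $N\in\mathbb{N}$ such that every element of $T$ is a sum of $N$ elements of the form $[b,c][d,e]$ with $b,c,d,e\in T$, where $[x,y]=xy-yx$. *)

theory Defs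
  imports "HOL-Analysis.Analysis" "HOL-Library.Numeral_Type"
begin

class unital_cstar_algebra = real_normed_algebra_1 + banach +
  fixes scaleC :: "complex \<Rightarrow> 'a \<Rightarrow> 'a"
    and cstar :: "'a \<Rightarrow> 'a"
  assumes scaleC_add_right: "scaleC c (x + y) = scaleC c x + scaleC c y"
    and scaleC_add_left: "scaleC (b + c) x = scaleC b x + scaleC c x"
    and scaleC_scaleC: "scaleC b (scaleC c x) = scaleC (b * c) x"
    and scaleC_one: "scaleC 1 x = x"
    and scaleC_of_real: "scaleC (complex_of_real r) x = scaleR r x"
    and mult_scaleC_left: "scaleC c x * y = scaleC c (x * y)"
    and mult_scaleC_right: "x * scaleC c y = scaleC c (x * y)"
    and norm_scaleC: "norm (scaleC c x) = cmod c * norm x"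
    and cstar_cstar: "cstar (cstar x) = x"
    and cstar_add: "cstar (x + y) = cstar x + cstar y"
    and cstar_scaleC: "cstar (scaleC c x) = scaleC (cnj c) (cstar x)"
    and cstar_mult: "cstar (x * y) = cstar y * cstar x"
    and cstar_identity: "norm (cstar x * x) = (norm x)\<^sup>2"

definition commutator :: "'a::ring \<Rightarrow> 'a \<Rightarrow> 'a" where
  "commutator x y = x * y - y * x"

definition sum_of_comm_prods :: "nat \<Rightarrow> 'a::ring \<Rightarrow> bool" where
  "sum_of_comm_prods N a \<longleftrightarrow>
     (\<exists>b c d e :: nat \<Rightarrow> 'a.
        a = (\<Sum>i<N. commutator (b i) (c i) * commutator (d i) (e i)))"

definition xi :: "'a::ring_1 itself \<Rightarrow> nat" where
  "xi _ = (LEAST N. \<forall>a::'a. sum_of_comm_prods N a)"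

text \<open>M_2(C) \<otimes> M_3(C) is identified with matrices indexed by 2 \<times> 3.\<close>
type_synonym mat6 = "complex ^ (2 \<times> 3) ^ (2 \<times> 3)"

definition kron :: "complex ^ 2 ^ 2 \<Rightarrow> complex ^ 3 ^ 3 \<Rightarrow> mat6" where
  "kron a b = (\<chi> p q. a $ fst p $ fst q * b $ snd p $ snd q)"

definition madj :: "mat6 \<Rightarrow> mat6" where
  "madj M = (\<chi> p q. cnj (M $ q $ p))"

definition mscale :: "complex \<Rightarrow> mat6 \<Rightarrow> mat6" where
  "mscale c M = (\<chi> p q. c * M $ p $ q)"

text \<open>Elements of Z_{2,3} are continuous functions on [0,1]; to represent them
  extensionally as total functions real => mat6 we require value 0 outside [0,1].\<close>
definition Z23 :: "(real \<Rightarrow> mat6) set" where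
  "Z23 = {f. continuous_on {0..1} f \<and> (\<forall>t. t \<notin> {0..1} \<longrightarrow> f t = 0)
            \<and> (\<exists>a. f 0 = kron a (mat 1)) \<and> (\<exists>b. f 1 = kron (mat 1) b)}"

definition Z23_one :: "real \<Rightarrow> mat6" where
  "Z23_one t = (if t \<in> {0..1} then mat 1 else 0)"

definition unital_star_hom_Z23 :: "((real \<Rightarrow> mat6) \<Rightarrow> 'a::unital_cstar_algebra) \<Rightarrow> bool" where
  "unital_star_hom_Z23 \<phi> \<longleftrightarrow>
     (\<forall>f\<in>Z23. \<forall>g\<in>Z23. \<phi> (\<lambda>t. f t + g t) = \<phi> f + \<phi> g) \<and>
     (\<forall>f\<in>Z23. \<forall>g\<in>Z23. \<phi> (\<lambda>t. f t ** g t) = \<phi> f * \<phi> g) \<and>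
     (\<forall>c. \<forall>f\<in>Z23. \<phi> (\<lambda>t. mscale c (f t)) = scaleC c (\<phi> f)) \<and>
     (\<forall>f\<in>Z23. \<phi> (\<lambda>t. madj (f t)) = cstar (\<phi> f)) \<and>
     \<phi> Z23_one = 1"

end

theory Submission
  imports Defs
begin

definition mu :: "'n::finite \<Rightarrow> 'n \<Rightarrow> complex^'n^'n" where
  "mu i j = (\<chi> p q. if p = i \<and> q = j then 1 else 0)"

lemma mu_mult: "mu i j ** mu k l = (if j = k then mu i l else 0)"
  by (auto simp: vec_eq_iff mu_def matrix_matrix_mult_def if_distrib[where f="\<lambda>x. _ * x"] sum.delta cong: if_cong)

lemma mu2_sum: "mu (0::2) 0 + mu 1 1 = mat 1"
  by (auto simp: vec_eq_iff mu_def mat_def forall_2)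

lemma mu3_sum: "mu (0::3) 0 + mu 1 1 + mu 2 2 = mat 1"
  by (auto simp: vec_eq_iff mu_def mat_def forall_3)

lemma kron_mult: "kron a b ** kron c d = kron (a ** c) (b ** d)"
proof -
  have "(\<Sum>k\<in>UNIV. a $ fst p $ fst k * b $ snd p $ snd k * (c $ fst k $ fst q * d $ snd k $ snd q))
     = (\<Sum>i\<in>UNIV. a $ fst p $ i * c $ i $ fst q) * (\<Sum>j\<in>UNIV. b $ snd p $ j * d $ j $ snd q)"
    for p q :: "2 \<times> 3"
  proof -
    define X where "X i j = (a $ fst p $ i * c $ i $ fst q) * (b $ snd p $ j * d $ j $ snd q)" for i j
    have "(\<Sum>i\<in>UNIV. a $ fst p $ i * c $ i $ fst q) * (\<Sum>j\<in>UNIV. b $ snd p $ j * d $ j $ snd q)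
        = (\<Sum>i\<in>UNIV. \<Sum>j\<in>UNIV. X i j)"
      by (simp add: X_def sum_product)
    also have "\<dots> = (\<Sum>(i,j)\<in>UNIV\<times>UNIV. X i j)" by (rule sum.cartesian_product)
    also have "\<dots> = (\<Sum>k\<in>UNIV. X (fst k) (snd k))" by (simp add: split_def UNIV_Times_UNIV)
    also have "\<dots> = (\<Sum>k\<in>UNIV. a $ fst p $ fst k * b $ snd p $ snd k * (c $ fst k $ fst q * d $ snd k $ snd q))"
      by (rule sum.cong) (simp_all add: X_def algebra_simps)
    finally show ?thesis by simp
  qed
  then show ?thesis
    by (simp add: vec_eq_iff kron_def matrix_matrix_mult_def)
qed

lemma kron_add_left: "kron a c + kron b c = kron (a + b) c"
  by (simp add: vec_eq_iff kron_def algebra_simps)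
lemma kron_add_right: "kron a b + kron a c = kron a (b + c)"
  by (simp add: vec_eq_iff kron_def algebra_simps)
lemma kron_zero_left[simp]: "kron 0 b = 0"
  by (simp add: vec_eq_iff kron_def)
lemma kron_zero_right[simp]: "kron a 0 = 0"
  by (simp add: vec_eq_iff kron_def)
lemma kron_one: "kron (mat 1) (mat 1) = mat 1"
  by (auto simp: vec_eq_iff kron_def mat_def prod_eq_iff)
lemma kron_scaleR_left: "c *\<^sub>R kron a b = kron (c *\<^sub>R a) b"
  by (simp add: vec_eq_iff kron_def vector_scaleR_component; simp add: scaleR_conv_of_real)
lemma kron_scaleR_right: "c *\<^sub>R kron a b = kron a (c *\<^sub>R b)"
  by (simp add: vec_eq_iff kron_def vector_scaleR_component; simp add: scaleR_conv_of_real)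

lemma scaleR_matrix_mult: "(c *\<^sub>R (A::complex^'n^'m)) ** (d *\<^sub>R (B::complex^'k^'n)) = (c * d) *\<^sub>R (A ** B)"
  by (simp add: vec_eq_iff matrix_matrix_mult_def vector_scaleR_component; simp add: scaleR_conv_of_real sum_distrib_left algebra_simps)



definition goodL :: "(real \<Rightarrow> real) \<Rightarrow> bool" where
  "goodL g \<longleftrightarrow> continuous_on {0..1} g \<and> g 1 = 0"
definition goodR :: "(real \<Rightarrow> real) \<Rightarrow> bool" where
  "goodR g \<longleftrightarrow> continuous_on {0..1} g \<and> g 0 = 0"

lemma goodL_mult: "goodL g \<Longrightarrow> goodL h \<Longrightarrow> goodL (\<lambda>t. g t * h t)"
  by (auto simp: goodL_def intro: continuous_on_mult)
lemma goodR_mult: "goodR g \<Longrightarrow> goodR h \<Longrightarrow> goodR (\<lambda>t. g t * h t)"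
  by (auto simp: goodR_def intro: continuous_on_mult)

definition Lf :: "complex^2^2 \<Rightarrow> (real \<Rightarrow> real) \<Rightarrow> real \<Rightarrow> mat6" where
  "Lf a g = (\<lambda>t. if t \<in> {0..1} then g t *\<^sub>R kron a (mat 1) else 0)"
definition Rf :: "complex^3^3 \<Rightarrow> (real \<Rightarrow> real) \<Rightarrow> real \<Rightarrow> mat6" where
  "Rf b g = (\<lambda>t. if t \<in> {0..1} then g t *\<^sub>R kron (mat 1) b else 0)"

lemma cont_ifZ:
  assumes "continuous_on {0..1} g"
  shows "continuous_on {0..1} (\<lambda>t::real. if t \<in> {0..1} then g t *\<^sub>R (M::mat6) else 0)"
proof -
  have "continuous_on {0..1} (\<lambda>t. g t *\<^sub>R M)"
    by (intro continuous_intros assms)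
  then show ?thesis by (rule continuous_on_eq) auto
qed

lemma Lf_Z23: "goodL g \<Longrightarrow> Lf a g \<in> Z23"
  unfolding Z23_def goodL_def
proof (intro CollectI conjI allI impI)
  assume g: "continuous_on {0..1} g \<and> g 1 = 0"
  show "continuous_on {0..1} (Lf a g)" unfolding Lf_def using g by (intro cont_ifZ) auto
  show "Lf a g t = 0" if "t \<notin> {0..1}" for t using that by (auto simp: Lf_def)
  show "\<exists>b. Lf a g 0 = kron b (mat 1)"
    by (rule exI[of _ "g 0 *\<^sub>R a"]) (simp add: Lf_def kron_scaleR_left)
  show "\<exists>b. Lf a g 1 = kron (mat 1) b"
    by (rule exI[of _ 0]) (simp add: Lf_def g)
qed
lemma Rf_Z23: "goodR g \<Longrightarrow> Rf a g \<in> Z23"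
  unfolding Z23_def goodR_def
proof (intro CollectI conjI allI impI)
  assume g: "continuous_on {0..1} g \<and> g 0 = 0"
  show "continuous_on {0..1} (Rf a g)" unfolding Rf_def using g by (intro cont_ifZ) auto
  show "Rf a g t = 0" if "t \<notin> {0..1}" for t using that by (auto simp: Rf_def)
  show "\<exists>b. Rf a g 1 = kron (mat 1) b"
    by (rule exI[of _ "g 1 *\<^sub>R a"]) (simp add: Rf_def kron_scaleR_right)
  show "\<exists>b. Rf a g 0 = kron b (mat 1)"
    by (rule exI[of _ 0]) (simp add: Rf_def g)
qed

lemma Lf_mult: "(\<lambda>t. Lf a g t ** Lf a' h t) = Lf (a ** a') (\<lambda>t. g t * h t)"
  by (auto simp: Lf_def scaleR_matrix_mult kron_mult)
lemma Rf_mult: "(\<lambda>t. Rf a g t ** Rf a' h t) = Rf (a ** a') (\<lambda>t. g t * h t)"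
  by (auto simp: Rf_def scaleR_matrix_mult kron_mult)
lemma Lf_add: "(\<lambda>t. Lf a g t + Lf a' g t) = Lf (a + a') g"
  by (auto simp: Lf_def kron_add_left scaleR_add_right[symmetric])
lemma Rf_add: "(\<lambda>t. Rf a g t + Rf a' g t) = Rf (a + a') g"
  by (auto simp: Rf_def kron_add_right scaleR_add_right[symmetric])
lemma Lf_0: "Lf 0 g = (\<lambda>t. 0)"
  by (auto simp: Lf_def)
lemma Rf_0: "Rf 0 g = (\<lambda>t. 0)"
  by (auto simp: Rf_def)

lemma zero_Z23: "(\<lambda>t. 0) \<in> Z23"
  using Lf_Z23[of "\<lambda>t. 0" 0] by (simp add: goodL_def Lf_0)

lemma LR_one: "(\<And>t. g t + h t = 1) \<Longrightarrow> (\<lambda>t. Lf (mat 1) g t + Rf (mat 1) h t) = Z23_one"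
  by (auto simp: Lf_def Rf_def Z23_one_def kron_one scaleR_add_left[symmetric])

lemma comm_prods_lemma:
  fixes k p y b c :: "nat \<Rightarrow> 'a::ring_1"
  assumes "\<And>i. k i = commutator (b i) (c i)" "\<And>i. i < n \<Longrightarrow> k i * y i = 0"
    and "(\<Sum>i<n. k i * p i * y i) = 1"
  shows "sum_of_comm_prods n (a::'a)"
proof -
  have "a = (\<Sum>i<n. k i * p i * y i) * a" using assms(3) by simp
  also have "\<dots> = (\<Sum>i<n. commutator (b i) (c i) * commutator (p i) (y i * a))"
    unfolding sum_distrib_right
  proof (rule sum.cong)
    fix i assume "i \<in> {..<n}"
    then have "k i * y i = 0" using assms(2) by simp
    then have "k i * (y i * a * p i) = 0" by (metis mult.assoc mult_zero_left)
    moreover have "commutator (b i) (c i) * commutator (p i) (y i * a) = k i * (p i * (y i * a)) - k i * (y i * a * p i)"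
      by (simp add: assms(1)[of i, symmetric] commutator_def[of "p i"] right_diff_distrib)
    ultimately show "k i * p i * y i * a = commutator (b i) (c i) * commutator (p i) (y i * a)"
      by (simp add: mult.assoc)
  qed simp
  finally show ?thesis unfolding sum_of_comm_prods_def
    by (intro exI[of _ b] exI[of _ c] exI[of _ p] exI[of _ "\<lambda>i. y i * a"])
qed

locale zhom =
  fixes \<phi> :: "(real \<Rightarrow> mat6) \<Rightarrow> 'a::unital_cstar_algebra"
  assumes hom: "unital_star_hom_Z23 \<phi>"
begin

lemma phi_add: "f \<in> Z23 \<Longrightarrow> g \<in> Z23 \<Longrightarrow> \<phi> f + \<phi> g = \<phi> (\<lambda>t. f t + g t)"
  using hom unfolding unital_star_hom_Z23_def by auto
lemma phi_mult: "f \<in> Z23 \<Longrightarrow> g \<in> Z23 \<Longrightarrow> \<phi> f * \<phi> g = \<phi> (\<lambda>t. f t ** g t)"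
  using hom unfolding unital_star_hom_Z23_def by auto
lemma phi_one: "\<phi> Z23_one = 1"
  using hom unfolding unital_star_hom_Z23_def by auto
lemma phi_zero: "\<phi> (\<lambda>t. 0) = 0"
  using phi_add[OF zero_Z23 zero_Z23] by simp

lemma L_mult: "goodL g \<Longrightarrow> goodL h \<Longrightarrow> \<phi> (Lf a g) * \<phi> (Lf a' h) = \<phi> (Lf (a ** a') (\<lambda>t. g t * h t))"
  by (simp add: phi_mult Lf_Z23 Lf_mult)
lemma R_mult: "goodR g \<Longrightarrow> goodR h \<Longrightarrow> \<phi> (Rf a g) * \<phi> (Rf a' h) = \<phi> (Rf (a ** a') (\<lambda>t. g t * h t))"
  by (simp add: phi_mult Rf_Z23 Rf_mult)
lemma L_add: "goodL g \<Longrightarrow> \<phi> (Lf a g) + \<phi> (Lf a' g) = \<phi> (Lf (a + a') g)"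
  by (simp add: phi_add Lf_Z23 Lf_add)
lemma R_add: "goodR g \<Longrightarrow> \<phi> (Rf a g) + \<phi> (Rf a' g) = \<phi> (Rf (a + a') g)"
  by (simp add: phi_add Rf_Z23 Rf_add)
lemma L_0: "\<phi> (Lf 0 g) = 0" by (simp add: Lf_0 phi_zero)
lemma R_0: "\<phi> (Rf 0 g) = 0" by (simp add: Rf_0 phi_zero)

lemma termL:
  assumes g: "goodL g" and g': "goodL g'" and rs: "r \<noteq> s"
  shows "commutator (\<phi> (Lf (mu r r) g)) (\<phi> (Lf (mu r s) g)) * \<phi> (Lf (mu r r) g) = 0"
    and "commutator (\<phi> (Lf (mu r r) g)) (\<phi> (Lf (mu r s) g)) * \<phi> (Lf (mu s r) g') * \<phi> (Lf (mu r r) g)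
       = \<phi> (Lf (mu r r) (\<lambda>t. g t * g t * g' t * g t))"
  using rs by (simp_all add: commutator_def left_diff_distrib L_mult g g' goodL_mult mu_mult L_0)

lemma termR:
  assumes g: "goodR g" and g': "goodR g'" and rs: "r \<noteq> s"
  shows "commutator (\<phi> (Rf (mu r r) g)) (\<phi> (Rf (mu r s) g)) * \<phi> (Rf (mu r r) g) = 0"
    and "commutator (\<phi> (Rf (mu r r) g)) (\<phi> (Rf (mu r s) g)) * \<phi> (Rf (mu s r) g') * \<phi> (Rf (mu r r) g)
       = \<phi> (Rf (mu r r) (\<lambda>t. g t * g t * g' t * g t))"
  using rs by (simp_all add: commutator_def left_diff_distrib R_mult g g' goodR_mult mu_mult R_0)

end

definition g0 :: "real \<Rightarrow> real" where "g0 t = 1 - t"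
definition gp :: "real \<Rightarrow> real" where "gp t = (1 - t) * (1 + 4*t + 10*t^2 + 20*t^3)"
definition h0 :: "real \<Rightarrow> real" where "h0 t = t"
definition hq :: "real \<Rightarrow> real" where "hq t = t * (35 - 84*t + 70*t^2 - 20*t^3)"

lemma good_fns: "goodL g0" "goodL gp" "goodR h0" "goodR hq"
  unfolding goodL_def goodR_def g0_def gp_def h0_def hq_def
  by (auto intro!: continuous_intros)

lemma partition: "g0 t * g0 t * gp t * g0 t + h0 t * h0 t * hq t * h0 t = 1"
  unfolding g0_def gp_def h0_def hq_def by algebra

context zhom begin

lemma all_comm6: "sum_of_comm_prods 6 (a::'a)"
proof -
  define B :: "nat \<Rightarrow> 'a" where "B = (\<lambda>i. [\<phi> (Lf (mu 0 0) g0), \<phi> (Lf (mu 1 1) g0),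
     \<phi> (Rf (mu 0 0) h0), \<phi> (Rf (mu 1 1) h0), \<phi> (Rf (mu 2 2) h0), 0] ! i)"
  define C :: "nat \<Rightarrow> 'a" where "C = (\<lambda>i. [\<phi> (Lf (mu 0 1) g0), \<phi> (Lf (mu 1 0) g0),
     \<phi> (Rf (mu 0 1) h0), \<phi> (Rf (mu 1 2) h0), \<phi> (Rf (mu 2 0) h0), 0] ! i)"
  define P :: "nat \<Rightarrow> 'a" where "P = (\<lambda>i. [\<phi> (Lf (mu 1 0) gp), \<phi> (Lf (mu 0 1) gp),
     \<phi> (Rf (mu 1 0) hq), \<phi> (Rf (mu 2 1) hq), \<phi> (Rf (mu 0 2) hq), 0] ! i)"
  define Y :: "nat \<Rightarrow> 'a" where "Y = (\<lambda>i. [\<phi> (Lf (mu 0 0) g0), \<phi> (Lf (mu 1 1) g0),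
     \<phi> (Rf (mu 0 0) h0), \<phi> (Rf (mu 1 1) h0), \<phi> (Rf (mu 2 2) h0), 0] ! i)"
  define K where "K = (\<lambda>i. commutator (B i) (C i))"
  define \<alpha> where "\<alpha> = (\<lambda>t. g0 t * g0 t * gp t * g0 t)"
  define \<beta> where "\<beta> = (\<lambda>t. h0 t * h0 t * hq t * h0 t)"
  have ne: "(0::2) \<noteq> 1" "(1::2) \<noteq> 0" "(0::3) \<noteq> 1" "(1::3) \<noteq> 2" "(2::3) \<noteq> 0" by simp_all
  have gd: "goodL \<alpha>" "goodR \<beta>"
    unfolding \<alpha>_def \<beta>_def by (simp_all add: goodL_mult goodR_mult good_fns)
  show ?thesis
  proof (rule comm_prods_lemma[where k = K and b = B and c = C and p = P and y = Y])
    show "K i = commutator (B i) (C i)" for i by (simp add: K_def)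
    show "K i * Y i = 0" if "i < 6" for i
    proof -
      have "i = 0 \<or> i = 1 \<or> i = 2 \<or> i = 3 \<or> i = 4 \<or> i = 5" using that by auto
      then show ?thesis
        by (elim disjE) (simp_all add: K_def B_def C_def Y_def termL(1)[OF good_fns(1,2)] termR(1)[OF good_fns(3,4)] ne)
    qed
    have "(\<Sum>i<6. K i * P i * Y i) = \<phi> (Lf (mu 0 0) \<alpha>) + \<phi> (Lf (mu 1 1) \<alpha>)
       + \<phi> (Rf (mu 0 0) \<beta>) + \<phi> (Rf (mu 1 1) \<beta>) + \<phi> (Rf (mu 2 2) \<beta>)"
      by (simp add: eval_nat_numeral K_def B_def C_def P_def Y_def termL(2)[OF good_fns(1,2)] termR(2)[OF good_fns(3,4)] ne \<alpha>_def \<beta>_def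
          add.assoc)
    also have "\<dots> = \<phi> (Lf (mat 1) \<alpha>) + \<phi> (Rf (mat 1) \<beta>)"
      using gd by (simp add: L_add R_add add.assoc mu2_sum mu3_sum[simplified add.assoc])
    also have "\<dots> = \<phi> Z23_one"
      using gd by (simp add: phi_add Lf_Z23 Rf_Z23 LR_one \<alpha>_def \<beta>_def partition)
    also have "\<dots> = 1" by (rule phi_one)
    finally show "(\<Sum>i<6. K i * P i * Y i) = 1" .
  qed
qed

end

theorem theorem6p4:
  fixes \<phi> :: "(real \<Rightarrow> mat6) \<Rightarrow> 'a::unital_cstar_algebra"
  assumes "unital_star_hom_Z23 \<phi>"
  shows "(\<exists>N. \<forall>a::'a. sum_of_comm_prods N a) \<and> xi TYPE('a) \<le> 6"
proof -
  interpret zhom \<phi> by unfold_locales (rule assms)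
  have all: "\<forall>a::'a. sum_of_comm_prods 6 a" using all_comm6 by blast
  have "xi TYPE('a) \<le> 6" unfolding xi_def by (rule Least_le) (rule all)
  with all show ?thesis by blast
qed

end
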